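(* For every set $X$, the function $\theta_X\colon\mathrm L^+(\mathrm L^+(X))\to\mathrm L^+(\mathrm L^+(X))$ is injective. If $X$ is non-empty, then $\theta_X$ is not surjective.
   Context: For a set $X$, $\mathrm L^+(X)=\coprod_{n>0}X^n$ is the set of non-empty finite lists $[x_1,\dots,x_n]$ of elements of $X$. The map $\theta_X$ sends a list of lists $[[x_{1,1},\dots,x_{1,n_1}],\dots,[x_{m,1},\dots,x_{m,n_m}]]$ (with $m,n_i\ge1$) to the list consisting, in order, for $i=1,\dots,m$ and then $j=1,\dots,n_i$, of the lists $[x_{i,j},x_{i+1,1},x_{i+2,1},\dots,x_{m,1}]$; i.e. $[[x_{1,1},x_{2,1},\dots,x_{m,1}],\dots,[x_{1,n_1},x_{2,1},\dots,x_{m,1}],[x_{2,1},x_{3,1},\dots,x_{m,1}],\dots,[x_{2,n_2},x_{3,1},\dots,x_{m,1}],\dots,[x_{m,1}],\dots,[x_{m,n_m}]]$. *)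

theory Defs
  imports Main
begin

definition Lplus :: "'a set \<Rightarrow> 'a list set" where
  "Lplus X = {xs. xs \<noteq> [] \<and> set xs \<subseteq> X}"

text \<open>theta [[x11..x1n1],...,[xm1..xmnm]] lists, for i = 1..m and j = 1..ni,
  the list [xij, x(i+1)1, ..., xm1].\<close>
fun theta :: "'a list list \<Rightarrow> 'a list list" where
  "theta [] = []"
| "theta (xs # xss) = map (\<lambda>x. x # map hd xss) xs @ theta xss"

end

theory Submission
  imports Defs
begin

lemma theta_len_le: "ys \<in> set (theta xss) \<Longrightarrow> length ys \<le> length xss"
  by (induction xss rule: theta.induct) auto

lemma theta_length: "\<forall>xs\<in>set xss. xs \<noteq> [] \<Longrightarrow> length (theta xss) \<ge> length xss"
proof (induction xss rule: theta.induct)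
  case (2 xs xss)
  then show ?case by (cases xs) auto
qed simp

lemma theta_hd: "xss \<noteq> [] \<Longrightarrow> \<forall>xs\<in>set xss. xs \<noteq> [] \<Longrightarrow> length (hd (theta xss)) = length xss"
  by (cases xss rule: theta.cases) (auto simp: neq_Nil_conv)

lemma theta_inj: "\<forall>xs\<in>set xss. xs \<noteq> [] \<Longrightarrow> \<forall>xs\<in>set yss. xs \<noteq> [] \<Longrightarrow> theta xss = theta yss \<Longrightarrow> xss = yss"
proof (induction xss arbitrary: yss rule: theta.induct)
  case 1
  then show ?case by (cases yss) (auto simp: neq_Nil_conv)
next
  case (2 xs xss)
  obtain ys yss' where Y: "yss = ys # yss'"
    using 2 by (cases yss) (auto simp: neq_Nil_conv)
  have "length (hd (theta (xs#xss))) = length (hd (theta (ys#yss')))" using 2 Y by simp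
  hence L: "length xss = length yss'" using theta_hd[of "xs#xss"] theta_hd[of "ys#yss'"] 2(2,3) Y by simp
  define P where "P = (\<lambda>l::'a list. length l = Suc (length xss))"
  have A1: "\<forall>l\<in>set (theta xss). \<not> P l" using theta_len_le P_def by fastforce
  have A2: "\<forall>l\<in>set (theta yss'). \<not> P l" using theta_len_le P_def L by fastforce
  have E: "map (\<lambda>x. x # map hd xss) xs @ theta xss = map (\<lambda>x. x # map hd yss') ys @ theta yss'"
    using 2 Y by simp
  have T1: "takeWhile P (map (\<lambda>x. x # map hd xss) xs @ theta xss) = map (\<lambda>x. x # map hd xss) xs"
    using A1 by (subst takeWhile_append2) (auto simp: P_def takeWhile_eq_Nil_iff)
  have T2: "takeWhile P (map (\<lambda>x. x # map hd yss') ys @ theta yss') = map (\<lambda>x. x # map hd yss') ys"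
    using A2 L by (subst takeWhile_append2) (auto simp: P_def takeWhile_eq_Nil_iff)
  have M: "map (\<lambda>x. x # map hd xss) xs = map (\<lambda>x. x # map hd yss') ys"
    using E T1 T2 by metis
  hence "theta xss = theta yss'" using E by simp
  hence "xss = yss'" using 2 Y by auto
  with M have "xs = ys"
    by (metis (no_types, lifting) list.inj_map_strong list.inject)
  then show ?case using Y \<open>xss = yss'\<close> by simp
qed

theorem proposition5p2:
  fixes X :: "'a set"
  shows "inj_on theta (Lplus (Lplus X)) \<and>
         (X \<noteq> {} \<longrightarrow> \<not> (Lplus (Lplus X) \<subseteq> theta ` Lplus (Lplus X)))"
proof
  show "inj_on theta (Lplus (Lplus X))"
    unfolding inj_on_def Lplus_def using theta_inj by blast
next
  show "X \<noteq> {} \<longrightarrow> \<not> (Lplus (Lplus X) \<subseteq> theta ` Lplus (Lplus X))"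
  proof
    assume "X \<noteq> {}"
    then obtain x where x: "x \<in> X" by blast
    have inL: "[[x,x]] \<in> Lplus (Lplus X)" using x by (simp add: Lplus_def)
    have "[[x,x]] \<notin> theta ` Lplus (Lplus X)"
    proof
      assume "[[x,x]] \<in> theta ` Lplus (Lplus X)"
      then obtain xss where xss: "xss \<in> Lplus (Lplus X)" "theta xss = [[x,x]]" by (metis imageE)
      have ne: "xss \<noteq> []" "\<forall>xs\<in>set xss. xs \<noteq> []" using xss(1) by (auto simp: Lplus_def)
      have "length xss \<le> 1" using theta_length[OF ne(2)] xss(2) by simp
      moreover have "length xss = 2" using theta_hd[OF ne] xss(2) by simp
      ultimately show False by simp
    qed
    with inL show "\<not> (Lplus (Lplus X) \<subseteq> theta ` Lplus (Lplus X))" by blast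
  qed
qed

end
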